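(* Let $c_m=\binom{2m+1}{m}$ for $m\ge0$. For $n\ge1$ let $P_n(x)$ be the determinant of the $(n+1)\times(n+1)$ matrix with first row $(1,x,x^2,\dots,x^n)$ and row $i+1$ equal to $(c_{i-1},c_i,\dots,c_{i-1+n})$ for $i=1,\dots,n$, and let $P^{(1)}_n(x)$ be the determinant of the $(n+1)\times(n+1)$ matrix with first row $(1,x,\dots,x^n)$ and row $i+1$ equal to $(c_i,c_{i+1},\dots,c_{i+n})$ for $i=1,\dots,n$. Set $t_n(x)=(-1)^nP_n(x)$ and $t^{(1)}_n(x)=\frac{(-1)^n}{2n+1}P^{(1)}_n(x)$. Then for all $n\ge1$: $t_n(4)=1$ and $t^{(1)}_n(4)=\frac{n+1}{2n+1}$. *)

theory Defs
  imports Complex_Main "Jordan_Normal_Form.Determinant"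
begin

definition c :: "nat \<Rightarrow> real" where
  "c m = real ((2*m+1) choose m)"

definition hmat :: "nat \<Rightarrow> nat \<Rightarrow> real \<Rightarrow> real mat" where
  "hmat s n x = mat (n+1) (n+1) (\<lambda>(i,j). if i = 0 then x ^ j else c (i - 1 + s + j))"

definition P :: "nat \<Rightarrow> real \<Rightarrow> real" where
  "P n x = det (hmat 0 n x)"

definition P1 :: "nat \<Rightarrow> real \<Rightarrow> real" where
  "P1 n x = det (hmat 1 n x)"

definition t :: "nat \<Rightarrow> real \<Rightarrow> real" where
  "t n x = (-1)^n * P n x"

definition t1 :: "nat \<Rightarrow> real \<Rightarrow> real" where
  "t1 n x = (-1)^n / real (2*n+1) * P1 n x"

end

theory Submission
  imports Defs
begin


lemma half_sum: "(\<Sum>k\<le>j. real ((2*j+1) choose (j-k))) = 4^j"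
proof -
  have "(\<Sum>k\<le>j. (2*j+1) choose (j-k)) = (\<Sum>k\<le>j. (2*j+1) choose k)"
    using sum.atLeastAtMost_rev[of "\<lambda>k. (2*j+1) choose (j-k)" 0 j]
    by (simp add: atLeast0AtMost)
  also have "\<dots> = 2^(2*j)" by (rule binomial_r_part_sum)
  finally have "(\<Sum>k\<le>j. (2*j+1) choose (j-k)) = 4^j" by (simp add: power_mult)
  then show ?thesis by (metis (mono_tags) of_nat_numeral of_nat_power of_nat_sum)
qed

lemma alt1: "(\<Sum>r\<le>m. (-1)^r * real (Suc N choose r)) = (-1)^m * real (N choose m)"
proof (induction m)
  case 0 then show ?case by simp
next
  case (Suc m)
  then show ?case by (simp add: algebra_simps)
qed

lemma neg_help: "(A::real) * B = C * D \<Longrightarrow> (-1)^(Suc r) * A * B = - (C * ((-1)^r * D))"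
  by (simp add: algebra_simps)

lemma alt2: "(\<Sum>r\<le>Suc m. (-1)^r * real r * real (Suc (Suc N) choose r))
   = - ((-1)^m * real (N+2) * real (N choose m))"
proof -
  have "(\<Sum>r\<le>Suc m. (-1)^r * real r * real (Suc (Suc N) choose r))
     = (\<Sum>r\<le>m. (-1)^(Suc r) * real (Suc r) * real (Suc (Suc N) choose Suc r))"
    by (subst sum.atMost_Suc_shift) simp
  also have "\<dots> = (\<Sum>r\<le>m. - (real (N+2) * ((-1)^r * real (Suc N choose r))))"
  proof (rule sum.cong)
    fix r
    have "real (Suc r) * real (Suc (Suc N) choose Suc r) = real (Suc (Suc N)) * real (Suc N choose r)"
      using Suc_times_binomial[of r "Suc N"] by (metis of_nat_mult)
    then show "(-1)^(Suc r) * real (Suc r) * real (Suc (Suc N) choose Suc r) = - (real (N+2) * ((-1)^r * real (Suc N choose r)))"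
      using neg_help[of "real (Suc r)" "real (Suc (Suc N) choose Suc r)" "real (Suc (Suc N))" "real (Suc N choose r)" r]
      by simp
  qed simp
  also have "\<dots> = - (real (N+2) * (\<Sum>r\<le>m. (-1)^r * real (Suc N choose r)))"
    by (simp add: sum_negf sum_distrib_left)
  also have "\<dots> = - ((-1)^m * real (N+2) * real (N choose m))"
    by (simp add: alt1)
  finally show ?thesis .
qed

lemma central2: "(2*Suc j) choose (Suc j) = 2 * ((2*j+1) choose j)"
proof -
  have "(2*Suc j) choose (Suc j) = ((2*j+1) choose j) + ((2*j+1) choose Suc j)"
    by (simp add: numeral_2_eq_2)
  moreover have "(2*j+1) choose Suc j = (2*j+1) choose j"
    using binomial_symmetric[of "Suc j" "2*j+1"] by simp
  ultimately show ?thesis by simp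
qed

lemma identC:
  assumes "i \<ge> 1"
  shows "(\<Sum>k\<le>i. (-1)^k * (2*real k+1) * real ((2*i+1) choose (i-k))) = 0"
proof -
  obtain j where ij: "i = Suc j" using assms by (cases i) auto
  have "(\<Sum>k\<le>i. (-1)^k * (2*real k+1) * real ((2*i+1) choose (i-k)))
      = (\<Sum>r\<le>i. (-1)^(i-r) * (2*real (i-r)+1) * real ((2*i+1) choose r))"
    using sum.atLeastAtMost_rev[of "\<lambda>k. (-1)^k * (2*real k+1) * real ((2*i+1) choose (i-k))" 0 i]
    by (simp add: atLeast0AtMost)
  also have "\<dots> = (\<Sum>r\<le>i. (-1)^i * ((2*real i+1) * ((-1)^r * real ((2*i+1) choose r))
                     - 2 * ((-1)^r * real r * real ((2*i+1) choose r))))"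
  proof (rule sum.cong)
    fix r assume "r \<in> {..i}"
    then have r: "r \<le> i" by simp
    then have "(-1::real)^(i-r) = (-1)^i * (-1)^r"
    proof -
      have "(-1::real)^i = (-1)^(i-r) * (-1)^r" using r by (simp add: power_add[symmetric])
      then have "(-1::real)^i * (-1)^r = (-1)^(i-r) * ((-1)^r * (-1)^r)" by (simp add: algebra_simps)
      also have "(-1::real)^r * (-1)^r = 1" by (simp add: power_add[symmetric] flip: power_mult_distrib)
      finally show ?thesis by simp
    qed
    moreover have "real (i-r) = real i - real r" using r by simp
    ultimately show "(-1)^(i-r) * (2*real (i-r)+1) * real ((2*i+1) choose r) =
      (-1)^i * ((2*real i+1) * ((-1)^r * real ((2*i+1) choose r))
                     - 2 * ((-1)^r * real r * real ((2*i+1) choose r)))"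
      by (simp add: algebra_simps)
  qed simp
  also have "\<dots> = (-1)^i * ((2*real i+1) * (\<Sum>r\<le>i. (-1)^r * real ((2*i+1) choose r))
       - 2 * (\<Sum>r\<le>i. (-1)^r * real r * real ((2*i+1) choose r)))"
    by (simp only: sum_subtractf flip: sum_distrib_left)
  also have "(\<Sum>r\<le>i. (-1)^r * real ((2*i+1) choose r)) = (-1)^i * real ((2*i) choose i)"
    using alt1[where m=i and N="2*i"] by simp
  also have "(\<Sum>r\<le>i. (-1)^r * real r * real ((2*i+1) choose r)) = - ((-1)^j * real (2*j+3) * real ((2*j+1) choose j))"
    using alt2[where m=j and N="2*j+1"] ij by (simp add: algebra_simps)
  also have "real ((2*i) choose i) = 2 * real ((2*j+1) choose j)"
    using central2[of j] ij by simp
  finally show ?thesis using ij by (simp add: algebra_simps)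
qed

lemma sum_delta: "(\<Sum>k\<le>n. (-1)^k * (2*real k+1)) = (-1)^n * (real n + 1)"
  by (induction n) (auto simp: algebra_simps)

lemma ip_nat:
  assumes ij: "i \<le> j"
  shows "2 * (\<Sum>k\<le>i. ((2*i+1) choose (i-k)) * ((2*j+1) choose (j-k))) = (2*(i+j)+2) choose (i+j+1)"
proof -
  define f where "f r = ((2*i+1) choose r) * ((2*j+1) choose (i+j+1-r))" for r
  define g where "g r = ((2*i+1) choose r) * ((2*j+1) choose (j-i+r))" for r
  have V: "(\<Sum>r\<le>i+j+1. f r) = (2*(i+j)+2) choose (i+j+1)"
  proof -
    have "(\<Sum>r\<le>i+j+1. f r) = (2*i+1+(2*j+1)) choose (i+j+1)"
      unfolding f_def by (rule vandermonde)
    moreover have "2*i+1+(2*j+1) = 2*(i+j)+2" by simp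
    ultimately show ?thesis by simp
  qed
  have "(\<Sum>r\<le>i+j+1. f r) = (\<Sum>r<2*i+2. f r)"
  proof (rule sum.mono_neutral_right)
    show "{..<2*i+2} \<subseteq> {..i+j+1}" using ij by auto
    show "\<forall>r\<in>{..i+j+1} - {..<2*i+2}. f r = 0" unfolding f_def by auto
  qed simp
  also have "\<dots> = (\<Sum>r<i+1. f r) + (\<Sum>r<i+1. f (i+1+r))"
  proof -
    have "{..<2*i+2} = {..<i+1} \<union> (\<lambda>r. i+1+r) ` {..<i+1}" 
    proof (rule subset_antisym)
      show "{..<2*i+2} \<subseteq> {..<i+1} \<union> (\<lambda>r. i+1+r) ` {..<i+1}"
      proof
        fix x assume x: "x \<in> {..<2*i+2}"
        show "x \<in> {..<i+1} \<union> (\<lambda>r. i+1+r) ` {..<i+1}"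
        proof (cases "x < i+1")
          case False
          then have "x = i+1+(x-(i+1))" "x-(i+1) \<in> {..<i+1}" using x by auto
          then show ?thesis by blast
        qed simp
      qed
    qed auto
    moreover have "{..<i+1} \<inter> (\<lambda>r. i+1+r) ` {..<i+1} = {}" by auto
    ultimately have "(\<Sum>r<2*i+2. f r) = sum f {..<i+1} + sum f ((\<lambda>r. i+1+r) ` {..<i+1})"
      by (metis finite_lessThan finite_imageI sum.union_disjoint)
    moreover have "sum f ((\<lambda>r. i+1+r) ` {..<i+1}) = (\<Sum>r<i+1. f (i+1+r))"
      by (subst sum.reindex) (auto simp: inj_on_def)
    ultimately show ?thesis by simp
  qed
  also have "(\<Sum>r<i+1. f (i+1+r)) = (\<Sum>r<i+1. f (i+1+(i+1 - Suc r)))"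
    using sum.nat_diff_reindex[of "\<lambda>r. f (i+1+r)" "i+1"] by simp
  also have "\<dots> = (\<Sum>r<i+1. g r)"
  proof (rule sum.cong)
    fix r assume "r \<in> {..<i+1}"
    then have r: "r \<le> i" by simp
    have e1: "i+1+(i+1 - Suc r) = 2*i+1 - r" using r by simp
    have e2: "(2*i+1) choose (2*i+1-r) = (2*i+1) choose r"
      using binomial_symmetric[of r "2*i+1"] r by simp
    have e3: "i+j+1 - (2*i+1-r) = j-i+r" using r ij by simp
    have "f (2*i+1-r) = g r" unfolding f_def g_def by (simp only: e2 e3)
    then show "f (i+1+(i+1 - Suc r)) = g r" by (simp only: e1)
  qed simp
  also have "(\<Sum>r<i+1. f r) = (\<Sum>r<i+1. g r)"
  proof (rule sum.cong)
    fix r assume "r \<in> {..<i+1}"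
    then have r: "r \<le> i" by simp
    have e1: "(2*j+1) choose (j-i+r) = (2*j+1) choose (2*j+1 - (j-i+r))"
      using binomial_symmetric[of "j-i+r" "2*j+1"] r ij by simp
    have e2: "2*j+1 - (j-i+r) = i+j+1-r" using r ij by simp
    show "f r = g r" unfolding f_def g_def by (simp only: e1 e2)
  qed simp
  also have "(\<Sum>r<i+1. g r) = (\<Sum>k\<le>i. ((2*i+1) choose (i-k)) * ((2*j+1) choose (j-k)))"
  proof -
    have "(\<Sum>k\<le>i. ((2*i+1) choose (i-k)) * ((2*j+1) choose (j-k))) = (\<Sum>k\<le>i. g (i-k))"
    proof (rule sum.cong)
      fix k assume "k \<in> {..i}"
      then have "k \<le> i" by simp
      then have "j - i + (i-k) = j - k" using ij by simp
      then show "((2*i+1) choose (i-k)) * ((2*j+1) choose (j-k)) = g (i-k)" unfolding g_def by (simp only:)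
    qed simp
    also have "\<dots> = (\<Sum>k\<le>i. g k)"
      using sum.atLeastAtMost_rev[of "\<lambda>k. g (i-k)" 0 i] by (simp add: atLeast0AtMost)
    finally show ?thesis by (simp add: lessThan_Suc_atMost)
  qed
  finally show ?thesis using V by simp
qed

lemma ip_real:
  assumes ij: "i \<le> j"
  shows "(\<Sum>k\<le>i. real ((2*i+1) choose (i-k)) * real ((2*j+1) choose (j-k))) = real ((2*(i+j)+1) choose (i+j))"
proof -
  have "2 * ((2*(i+j)+1) choose (i+j)) = (2*(i+j)+2) choose (i+j+1)"
    using central2[of "i+j"] by simp
  with ip_nat[OF ij] have "(\<Sum>k\<le>i. ((2*i+1) choose (i-k)) * ((2*j+1) choose (j-k))) = (2*(i+j)+1) choose (i+j)"
    by simp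
  then show ?thesis by (metis (mono_tags, lifting) of_nat_mult of_nat_sum sum.cong)
qed


definition bb :: "nat \<Rightarrow> nat \<Rightarrow> real" where
  "bb i k = (if k \<le> i then real ((2*i+1) choose (i-k)) else 0)"

lemma bb_diag[simp]: "bb i i = 1" by (simp add: bb_def)
lemma bb_zero[simp]: "i < k \<Longrightarrow> bb i k = 0" by (simp add: bb_def)

lemma sum_bb_restrict:
  assumes "i \<le> n"
  shows "(\<Sum>k<Suc n. bb i k * g k) = (\<Sum>k\<le>i. bb i k * g k)"
proof (rule sum.mono_neutral_right)
  show "{..i} \<subseteq> {..<Suc n}" using assms by auto
  show "\<forall>k\<in>{..<Suc n} - {..i}. bb i k * g k = 0" by auto
qed simp

lemma bb_ip_le:
  assumes "i \<le> j"
  shows "(\<Sum>k\<le>i. bb i k * bb j k) = c (i+j)"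
proof -
  have "(\<Sum>k\<le>i. bb i k * bb j k) = (\<Sum>k\<le>i. real ((2*i+1) choose (i-k)) * real ((2*j+1) choose (j-k)))"
    using assms by (intro sum.cong) (auto simp: bb_def)
  also have "\<dots> = c (i+j)" unfolding c_def using ip_real[OF assms] by (simp add: mult_2)
  finally show ?thesis .
qed

lemma bb_ip:
  assumes "i \<le> n"
  shows "(\<Sum>k<Suc n. bb i k * bb j k) = c (i+j)"
proof (cases "i \<le> j")
  case True
  then show ?thesis using sum_bb_restrict[OF assms] bb_ip_le by simp
next
  case False
  then have ji: "j \<le> i" by simp
  have "(\<Sum>k<Suc n. bb i k * bb j k) = (\<Sum>k<Suc n. bb j k * bb i k)" by (simp add: mult.commute)
  also have "\<dots> = (\<Sum>k\<le>j. bb j k * bb i k)" using sum_bb_restrict[of j n] ji assms by simp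
  also have "\<dots> = c (j+i)" using bb_ip_le[OF ji] .
  finally show ?thesis by (simp add: add.commute)
qed

lemma bb_row:
  assumes "j \<le> n"
  shows "(\<Sum>k<Suc n. bb j k) = 4^j"
proof -
  have "(\<Sum>k<Suc n. bb j k) = (\<Sum>k\<le>j. bb j k)"
    using sum_bb_restrict[OF assms, of "\<lambda>_. 1"] by simp
  also have "\<dots> = (\<Sum>k\<le>j. real ((2*j+1) choose (j-k)))" by (intro sum.cong) (auto simp: bb_def)
  also have "\<dots> = 4^j" by (rule half_sum)
  finally show ?thesis .
qed

lemma bb_delta:
  assumes "1 \<le> i" "i \<le> n"
  shows "(\<Sum>k<Suc n. bb i k * ((-1)^k * (2*real k+1))) = 0"
proof -
  have "(\<Sum>k<Suc n. bb i k * ((-1)^k * (2*real k+1))) = (\<Sum>k\<le>i. bb i k * ((-1)^k * (2*real k+1)))"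
    by (rule sum_bb_restrict[OF assms(2)])
  also have "\<dots> = (\<Sum>k\<le>i. (-1)^k * (2*real k+1) * real ((2*i+1) choose (i-k)))"
    by (intro sum.cong) (auto simp: bb_def)
  also have "\<dots> = 0" by (rule identC[OF assms(1)])
  finally show ?thesis .
qed

lemma prod_list_ones: "(\<And>i. i < m \<Longrightarrow> f i = 1) \<Longrightarrow> prod_list (map f [0..<m]) = (1::real)"
  by (induction m) auto

definition Bt :: "nat \<Rightarrow> real mat" where
  "Bt n = mat (n+1) (n+1) (\<lambda>(k,j). bb j k)"
definition Q0 :: "nat \<Rightarrow> real mat" where
  "Q0 n = mat (n+1) (n+1) (\<lambda>(i,k). if i = 0 then 1 else bb (i-1) k)"
definition Q1 :: "nat \<Rightarrow> real mat" where
  "Q1 n = mat (n+1) (n+1) (\<lambda>(i,k). if i = 0 then 1 else bb i k)"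
definition W :: "nat \<Rightarrow> real mat" where
  "W n = mat (n+1) (n+1) (\<lambda>(i,j). if j = 0 then (-1)^i * (2*real i+1) else if i = j then 1 else 0)"
definition R :: "nat \<Rightarrow> real mat" where
  "R n = mat (n+1) (n+1) (\<lambda>(i,j). if j = 0 then (if i = 0 then (-1)^n * (real n+1) else 0) else if i = 0 then 1 else bb i j)"

lemma det_Bt: "det (Bt n) = 1"
proof -
  have "upper_triangular (Bt n)" unfolding upper_triangular_def Bt_def by auto
  then have "det (Bt n) = prod_list (diag_mat (Bt n))"
    by (rule det_upper_triangular[of _ "n+1"]) (simp add: Bt_def)
  also have "\<dots> = 1" unfolding diag_mat_def by (rule prod_list_ones) (simp add: Bt_def)
  finally show ?thesis .
qed

lemma det_W: "det (W n) = 1"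
proof -
  have "det (W n) = prod_list (diag_mat (W n))"
    by (rule det_lower_triangular[of "n+1"]) (auto simp: W_def)
  also have "\<dots> = 1" unfolding diag_mat_def by (rule prod_list_ones) (simp add: W_def)
  finally show ?thesis .
qed

lemma hmat0: "hmat 0 n 4 = Q0 n * Bt n"
proof (rule eq_matI)
  fix i j assume i: "i < dim_row (Q0 n * Bt n)" and j: "j < dim_col (Q0 n * Bt n)"
  then have i': "i < Suc n" and j': "j < Suc n" by (auto simp: Q0_def Bt_def)
  have "(Q0 n * Bt n) $$ (i,j) = (\<Sum>k<Suc n. Q0 n $$ (i,k) * bb j k)"
    using i' j' by (simp add: Q0_def Bt_def scalar_prod_def lessThan_atLeast0)
  also have "\<dots> = (if i = 0 then 4^j else c (i - 1 + j))"
  proof (cases "i = 0")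
    case True
    then show ?thesis using bb_row[of j n] j' i' by (simp add: Q0_def)
  next
    case False
    then have "(\<Sum>k<Suc n. Q0 n $$ (i,k) * bb j k) = (\<Sum>k<Suc n. bb (i-1) k * bb j k)"
      using i' by (intro sum.cong) (auto simp: Q0_def)
    also have "\<dots> = c (i - 1 + j)" using bb_ip[of "i-1" n j] i' by simp
    finally show ?thesis using False by simp
  qed
  finally show "hmat 0 n 4 $$ (i,j) = (Q0 n * Bt n) $$ (i,j)"
    using i' j' by (simp add: hmat_def)
qed (auto simp: hmat_def Q0_def Bt_def)

lemma hmat1: "hmat 1 n 4 = Q1 n * Bt n"
proof (rule eq_matI)
  fix i j assume i: "i < dim_row (Q1 n * Bt n)" and j: "j < dim_col (Q1 n * Bt n)"
  then have i': "i < Suc n" and j': "j < Suc n" by (auto simp: Q1_def Bt_def)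
  have "(Q1 n * Bt n) $$ (i,j) = (\<Sum>k<Suc n. Q1 n $$ (i,k) * bb j k)"
    using i' j' by (simp add: Q1_def Bt_def scalar_prod_def lessThan_atLeast0)
  also have "\<dots> = (if i = 0 then 4^j else c (i + j))"
  proof (cases "i = 0")
    case True
    then show ?thesis using bb_row[of j n] j' i' by (simp add: Q1_def)
  next
    case False
    then have "(\<Sum>k<Suc n. Q1 n $$ (i,k) * bb j k) = (\<Sum>k<Suc n. bb i k * bb j k)"
      using i' by (intro sum.cong) (auto simp: Q1_def)
    also have "\<dots> = c (i + j)" using bb_ip[of i n j] i' by simp
    finally show ?thesis using False by simp
  qed
  finally show "hmat 1 n 4 $$ (i,j) = (Q1 n * Bt n) $$ (i,j)"
    using i' j' by (simp add: hmat_def)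
qed (auto simp: hmat_def Q1_def Bt_def)

lemma Q1W: "Q1 n * W n = R n"
proof (rule eq_matI)
  fix i j assume i: "i < dim_row (R n)" and j: "j < dim_col (R n)"
  then have i': "i < Suc n" and j': "j < Suc n" by (auto simp: R_def)
  have "(Q1 n * W n) $$ (i,j) = (\<Sum>k<Suc n. Q1 n $$ (i,k) * W n $$ (k,j))"
    using i' j' by (simp add: Q1_def W_def scalar_prod_def lessThan_atLeast0)
  also have "\<dots> = R n $$ (i,j)"
  proof (cases "j = 0")
    case True
    show ?thesis
    proof (cases "i = 0")
      case True
      have "(\<Sum>k<Suc n. Q1 n $$ (i,k) * W n $$ (k,j)) = (\<Sum>k\<le>n. (-1)^k * (2*real k+1))"
        unfolding lessThan_Suc_atMost[symmetric] using True \<open>j=0\<close>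
        by (intro sum.cong) (auto simp: Q1_def W_def)
      then show ?thesis using True \<open>j=0\<close> sum_delta[of n] by (simp add: R_def)
    next
      case False
      have "(\<Sum>k<Suc n. Q1 n $$ (i,k) * W n $$ (k,j)) = (\<Sum>k<Suc n. bb i k * ((-1)^k * (2*real k+1)))"
        using False \<open>j=0\<close> i' by (intro sum.cong) (auto simp: Q1_def W_def)
      then show ?thesis using False \<open>j=0\<close> bb_delta[of i n] i' by (simp add: R_def)
    qed
  next
    case False
    have "(\<Sum>k<Suc n. Q1 n $$ (i,k) * W n $$ (k,j)) = (\<Sum>k<Suc n. if k = j then Q1 n $$ (i,j) else 0)"
      using False j' by (intro sum.cong) (auto simp: W_def)
    also have "\<dots> = Q1 n $$ (i,j)" using j' by simp
    finally show ?thesis using False i' j' by (simp add: Q1_def R_def)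
  qed
  finally show "(Q1 n * W n) $$ (i,j) = R n $$ (i,j)" .
qed (auto simp: R_def Q1_def W_def)

lemma det_Q0: "det (Q0 n) = (-1)^n"
proof -
  have C: "Q0 n \<in> carrier_mat (Suc n) (Suc n)" by (simp add: Q0_def)
  have "det (Q0 n) = (\<Sum>i<Suc n. Q0 n $$ (i,n) * cofactor (Q0 n) i n)"
    by (rule laplace_expansion_column[OF C]) simp
  also have "\<dots> = Q0 n $$ (0,n) * cofactor (Q0 n) 0 n + (\<Sum>i<n. Q0 n $$ (Suc i,n) * cofactor (Q0 n) (Suc i) n)"
    by (subst sum.lessThan_Suc_shift) simp
  also have "(\<Sum>i<n. Q0 n $$ (Suc i,n) * cofactor (Q0 n) (Suc i) n) = 0"
    by (intro sum.neutral) (auto simp: Q0_def)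
  also have "Q0 n $$ (0,n) = 1" by (simp add: Q0_def)
  also have "cofactor (Q0 n) 0 n = (-1)^n * det (mat_delete (Q0 n) 0 n)"
    by (simp add: cofactor_def)
  also have "det (mat_delete (Q0 n) 0 n) = prod_list (diag_mat (mat_delete (Q0 n) 0 n))"
    by (rule det_lower_triangular[of n]) (auto simp: mat_delete_def Q0_def)
  also have "\<dots> = 1" unfolding diag_mat_def
    by (rule prod_list_ones) (simp add: mat_delete_def Q0_def)
  finally show ?thesis by simp
qed

lemma det_R: "det (R n) = (-1)^n * (real n + 1)"
proof -
  have C: "R n \<in> carrier_mat (Suc n) (Suc n)" by (simp add: R_def)
  have "det (R n) = (\<Sum>i<Suc n. R n $$ (i,0) * cofactor (R n) i 0)"
    by (rule laplace_expansion_column[OF C]) simp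
  also have "\<dots> = R n $$ (0,0) * cofactor (R n) 0 0 + (\<Sum>i<n. R n $$ (Suc i,0) * cofactor (R n) (Suc i) 0)"
    by (subst sum.lessThan_Suc_shift) simp
  also have "(\<Sum>i<n. R n $$ (Suc i,0) * cofactor (R n) (Suc i) 0) = 0"
    by (intro sum.neutral) (auto simp: R_def)
  also have "R n $$ (0,0) = (-1)^n * (real n + 1)" by (simp add: R_def)
  also have "cofactor (R n) 0 0 = det (mat_delete (R n) 0 0)"
    by (simp add: cofactor_def)
  also have "det (mat_delete (R n) 0 0) = prod_list (diag_mat (mat_delete (R n) 0 0))"
    by (rule det_lower_triangular[of n]) (auto simp: mat_delete_def R_def)
  also have "\<dots> = 1" unfolding diag_mat_def
    by (rule prod_list_ones) (simp add: mat_delete_def R_def)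
  finally show ?thesis by simp
qed

lemma P_4: "P n 4 = (-1)^n"
proof -
  have "P n 4 = det (Q0 n * Bt n)" unfolding P_def hmat0 ..
  also have "\<dots> = det (Q0 n) * det (Bt n)"
    by (rule det_mult[of _ "n+1"]) (auto simp: Q0_def Bt_def)
  finally show ?thesis by (simp add: det_Q0 det_Bt)
qed

lemma P1_4: "P1 n 4 = (-1)^n * (real n + 1)"
proof -
  have "det (R n) = det (Q1 n) * det (W n)"
    unfolding Q1W[symmetric] by (rule det_mult[of _ "n+1"]) (auto simp: Q1_def W_def)
  then have q: "det (Q1 n) = (-1)^n * (real n + 1)" by (simp add: det_W det_R)
  have "P1 n 4 = det (Q1 n * Bt n)" unfolding P1_def hmat1 ..
  also have "\<dots> = det (Q1 n) * det (Bt n)"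
    by (rule det_mult[of _ "n+1"]) (auto simp: Q1_def Bt_def)
  finally show ?thesis by (simp add: q det_Bt)
qed

theorem lemma9p1:
  fixes n :: nat
  assumes "n \<ge> 1"
  shows "t n 4 = 1 \<and> t1 n 4 = real (n+1) / real (2*n+1)"
proof
  show "t n 4 = 1" by (simp add: t_def P_4 flip: power_add)
  have "t1 n 4 = (-1)^n * (-1)^n * (real n + 1) / real (2*n+1)"
    by (simp add: t1_def P1_4)
  also have "(-1::real)^n * (-1)^n = 1" by (simp flip: power_add)
  finally show "t1 n 4 = real (n+1) / real (2*n+1)" by simp
qed

end
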